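(* Let $(S,\gamma)$ be a generic $C^\infty$ surface with boundary in $\mathbf{R}^3$ and let $\gamma(s_1)$ be a swallowtail-tangent point. Then the distance $d$ between $\gamma(s_1)$ and the corresponding swallowtail point of the boundary-envelope (the envelope-swallowtail) is $$d=\left|\frac{\kappa_2\sqrt{\kappa_2^2+\kappa_3^2}}{\kappa_2(\kappa_3'+\kappa_1\kappa_2)+\kappa_3(-\kappa_2'+\kappa_1\kappa_3)}\right|,$$ evaluated at $s=s_1$.
   Context: $S\subset\mathbf{R}^3$ is a co-oriented immersed $C^\infty$ surface with boundary curve $\gamma(s)$ parametrised by arc length; "generic" means for all surfaces in a residual subset w.r.t. the $C^\infty$ topology; primes denote $d/ds$. Adapted frame: $\boldsymbol e_1=\gamma'$, $\boldsymbol e_3=\boldsymbol n$ the unit normal, $\boldsymbol e_2=\boldsymbol e_3\times\boldsymbol e_1$; $\kappa_1,\kappa_2,\kappa_3$ are defined by $\boldsymbol e_1'=\kappa_1\boldsymbol e_2+\kappa_2\boldsymbol e_3$, $\boldsymbol e_2'=-\kappa_1\boldsymbol e_1+\kappa_3\boldsymbol e_3$, $\boldsymbol e_3'=-\kappa_2\boldsymbol e_1-\kappa_3\boldsymbol e_2$. The boundary-envelope is the envelope in $\mathbf{R}P^3$ of the one-parameter family of planes $T_{\gamma(s)}S=\{x: x\cdot\boldsymbol n(s)=\gamma(s)\cdot\boldsymbol n(s)\}$. A point $\gamma(s_1)$ is swallowtail-tangent if $T_{\gamma(s_1)}S$ contacts the boundary-envelope at a swallowtail singular point of the envelope (a germ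 right-left equivalent to $(x,t)\mapsto(x,4t^3-2xt,3t^4-xt^2)$); that swallowtail point is the envelope-swallowtail corresponding to $\gamma(s_1)$. (If the denominator vanishes the envelope-swallowtail lies at infinity.) *)

theory Defs
  imports "HOL-Analysis.Analysis"
begin

fun pderivs :: "'a::euclidean_space list \<Rightarrow> ('a \<Rightarrow> 'b::real_normed_vector) \<Rightarrow> 'a \<Rightarrow> 'b" where
  "pderivs [] f = f"
| "pderivs (v # vs) f = (\<lambda>x. vector_derivative (\<lambda>t. pderivs vs f (x + t *\<^sub>R v)) (at 0))"

definition smooth_on :: "'a::euclidean_space set \<Rightarrow> ('a \<Rightarrow> 'b::real_normed_vector) \<Rightarrow> bool" where
  "smooth_on U f \<longleftrightarrow> open U \<and>
     (\<forall>vs. set vs \<subseteq> Basis \<longrightarrow>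
        continuous_on U (pderivs vs f) \<and>
        (\<forall>x\<in>U. \<forall>v\<in>Basis. (\<lambda>t. pderivs vs f (x + t *\<^sub>R v)) differentiable (at 0)))"

definition diffeo_on :: "'a::euclidean_space set \<Rightarrow> 'a set \<Rightarrow> ('a \<Rightarrow> 'a) \<Rightarrow> bool" where
  "diffeo_on U V \<phi> \<longleftrightarrow> open U \<and> open V \<and> bij_betw \<phi> U V \<and>
     smooth_on U \<phi> \<and> smooth_on V (inv_into U \<phi>)"

definition rl_equiv_germ ::
  "'a::euclidean_space set \<Rightarrow> ('a \<Rightarrow> 'b::euclidean_space) \<Rightarrow> 'a \<Rightarrow> ('a \<Rightarrow> 'b) \<Rightarrow> 'a \<Rightarrow> bool" where
  "rl_equiv_germ D f a g b \<longleftrightarrow>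
     (\<exists>U U' W W' \<phi> \<psi>. b \<in> U \<and> U' \<subseteq> D \<and> f a \<in> W \<and>
        diffeo_on U U' \<phi> \<and> diffeo_on W W' \<psi> \<and> \<phi> b = a \<and>
        (\<forall>z\<in>U. f (\<phi> z) \<in> W \<and> \<psi> (f (\<phi> z)) = g z))"

definition swallowtail_germ :: "real \<times> real \<Rightarrow> real ^ 3" where
  "swallowtail_germ = (\<lambda>(x, t). vector [x, 4 * t ^ 3 - 2 * x * t, 3 * t ^ 4 - x * t ^ 2])"

definition frame_e1 :: "(real \<Rightarrow> real ^ 3) \<Rightarrow> real \<Rightarrow> real ^ 3" where
  "frame_e1 \<gamma> s = vector_derivative \<gamma> (at s)"

definition frame_e2 :: "(real \<Rightarrow> real ^ 3) \<Rightarrow> (real \<Rightarrow> real ^ 3) \<Rightarrow> real \<Rightarrow> real ^ 3" where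
  "frame_e2 \<gamma> n s = cross3 (n s) (frame_e1 \<gamma> s)"

text \<open>The curvatures are the coefficients in the frame equations
  e1' = k1 e2 + k2 e3, e2' = -k1 e1 + k3 e3 (e3 = n).\<close>
definition kappa1 :: "(real \<Rightarrow> real ^ 3) \<Rightarrow> (real \<Rightarrow> real ^ 3) \<Rightarrow> real \<Rightarrow> real" where
  "kappa1 \<gamma> n s = vector_derivative (frame_e1 \<gamma>) (at s) \<bullet> frame_e2 \<gamma> n s"

definition kappa2 :: "(real \<Rightarrow> real ^ 3) \<Rightarrow> (real \<Rightarrow> real ^ 3) \<Rightarrow> real \<Rightarrow> real" where
  "kappa2 \<gamma> n s = vector_derivative (frame_e1 \<gamma>) (at s) \<bullet> n s"

definition kappa3 :: "(real \<Rightarrow> real ^ 3) \<Rightarrow> (real \<Rightarrow> real ^ 3) \<Rightarrow> real \<Rightarrow> real" where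
  "kappa3 \<gamma> n s = vector_derivative (frame_e2 \<gamma> n) (at s) \<bullet> n s"

text \<open>Affine part of the envelope of the planes T_{gamma(s)}S = {x. x . n(s) = gamma(s) . n(s)}:
  the characteristic line of parameter s is the intersection of the plane with its
  derivative plane, i.e. gamma(s) + u (n(s) x n'(s)).\<close>
definition envelope_map :: "(real \<Rightarrow> real ^ 3) \<Rightarrow> (real \<Rightarrow> real ^ 3) \<Rightarrow> real \<times> real \<Rightarrow> real ^ 3" where
  "envelope_map \<gamma> n = (\<lambda>(s, u). \<gamma> s + u *\<^sub>R cross3 (n s) (vector_derivative n (at s)))"

text \<open>gamma(s1) is swallowtail-tangent and p (a finite point) is the corresponding
  envelope-swallowtail: T_{gamma(s1)}S contacts the envelope at p = envelope point on the
  characteristic line of s1, where the envelope germ is a swallowtail.\<close>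
definition envelope_swallowtail ::
  "real set \<Rightarrow> (real \<Rightarrow> real ^ 3) \<Rightarrow> (real \<Rightarrow> real ^ 3) \<Rightarrow> real \<Rightarrow> real ^ 3 \<Rightarrow> bool" where
  "envelope_swallowtail I \<gamma> n s1 p \<longleftrightarrow>
     (\<exists>u. p = envelope_map \<gamma> n (s1, u) \<and>
          rl_equiv_germ (I \<times> UNIV) (envelope_map \<gamma> n) (s1, u) swallowtail_germ (0, 0))"

end

theory Submission
  imports Defs
begin

lemma hvd_shift:
  fixes g :: "real \<Rightarrow> 'b::real_normed_vector"
  shows "((\<lambda>s. g (a + s)) has_vector_derivative D) (at 0) \<longleftrightarrow> (g has_vector_derivative D) (at a)"
proof
  assume h: "((\<lambda>s. g (a + s)) has_vector_derivative D) (at 0)"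
  have 1: "((\<lambda>x. x - a) has_vector_derivative 1) (at a)"
    by (auto intro!: derivative_eq_intros)
  have "(((\<lambda>s. g (a + s)) \<circ> (\<lambda>x. x - a)) has_vector_derivative (1 *\<^sub>R D)) (at a)"
    by (rule vector_diff_chain_at[OF 1]) (use h in simp)
  then show "(g has_vector_derivative D) (at a)" by (simp add: o_def)
next
  assume h: "(g has_vector_derivative D) (at a)"
  have 1: "((\<lambda>x. a + x) has_vector_derivative 1) (at 0)"
    by (auto intro!: derivative_eq_intros)
  have "((g \<circ> (\<lambda>x. a + x)) has_vector_derivative (1 *\<^sub>R D)) (at 0)"
    by (rule vector_diff_chain_at[OF 1]) (use h in simp)
  then show "((\<lambda>s. g (a + s)) has_vector_derivative D) (at 0)" by (simp add: o_def)
qed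

lemma vd_shift:
  fixes g :: "real \<Rightarrow> 'b::real_normed_vector"
  shows "vector_derivative (\<lambda>s. g (a + s)) (at 0) = vector_derivative g (at a)"
  unfolding vector_derivative_def using hvd_shift[of g a] by simp

lemma pderivs_append: "pderivs vs (pderivs ws f) = pderivs (vs @ ws) f"
  by (induction vs) auto

lemma smooth_on_pderivs: "smooth_on U f \<Longrightarrow> set ws \<subseteq> Basis \<Longrightarrow> smooth_on U (pderivs ws f)"
  unfolding smooth_on_def pderivs_append by auto


lemma pderivs_real1: "pderivs [1] (h::real\<Rightarrow>'b::real_normed_vector) = (\<lambda>x. vector_derivative h (at x))"
  by (auto simp: vd_shift)

lemma smooth_real_hvd:
  fixes h :: "real \<Rightarrow> 'b::real_normed_vector"
  assumes "smooth_on I h" "x \<in> I"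
  shows "(h has_vector_derivative vector_derivative h (at x)) (at x)"
proof -
  have "(\<lambda>t. h (x + t *\<^sub>R 1)) differentiable (at 0)"
    using assms unfolding smooth_on_def by (metis Basis_real_def empty_subsetI insertI1 list.set(1) pderivs.simps(1))
  hence "((\<lambda>t. h (x + t)) has_vector_derivative vector_derivative (\<lambda>t. h (x + t)) (at 0)) (at 0)"
    by (simp add: vector_derivative_works)
  thus ?thesis by (simp add: hvd_shift vd_shift)
qed

lemma smooth_real_D:
  fixes h :: "real \<Rightarrow> 'b::real_normed_vector"
  assumes "smooth_on I h"
  shows "smooth_on I (\<lambda>x. vector_derivative h (at x))"
  using smooth_on_pderivs[OF assms, of "[1]"] by (simp add: pderivs_real1 Basis_real_def vd_shift)

lemma norm_sum_basis_le:
  fixes h :: "'a::euclidean_space"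
  assumes "B \<subseteq> Basis"
  shows "norm (\<Sum>b\<in>B. (h \<bullet> b) *\<^sub>R b) \<le> (\<Sum>b\<in>B. \<bar>h \<bullet> b\<bar>)"
proof -
  have "norm (\<Sum>b\<in>B. (h \<bullet> b) *\<^sub>R b) \<le> (\<Sum>b\<in>B. norm ((h \<bullet> b) *\<^sub>R b))" by (rule norm_sum)
  also have "\<dots> = (\<Sum>b\<in>B. \<bar>h \<bullet> b\<bar>)"
    using assms by (intro sum.cong) (auto simp: subset_iff)
  finally show ?thesis .
qed

lemma sum_abs_basis_le: "(\<Sum>b\<in>Basis. \<bar>(h::'a::euclidean_space) \<bullet> b\<bar>) \<le> DIM('a) * norm h"
proof -
  have "(\<Sum>b\<in>Basis. \<bar>h \<bullet> b\<bar>) \<le> (\<Sum>b\<in>(Basis::'a set). norm h)"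
    by (intro sum_mono) (simp add: Basis_le_norm)
  thus ?thesis by simp
qed

lemma norm3: "norm (a + b + c) \<le> norm a + norm b + (norm c::real)"
  for a b c :: "'b::real_normed_vector"
  by (metis add_right_mono norm_triangle_ineq order_trans)

lemma partials_has_derivative:
  fixes f :: "'a::euclidean_space \<Rightarrow> 'b::real_normed_vector"
  assumes U: "open U" "x \<in> U"
    and pd: "\<And>y i. y \<in> U \<Longrightarrow> i \<in> Basis \<Longrightarrow> ((\<lambda>t. f (y + t *\<^sub>R i)) has_vector_derivative Dp i y) (at 0)"
    and cont: "\<And>i. i \<in> Basis \<Longrightarrow> continuous_on U (Dp i)"
  shows "(f has_derivative (\<lambda>h. \<Sum>i\<in>Basis. (h \<bullet> i) *\<^sub>R Dp i x)) (at x)"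
  unfolding has_derivative_at_alt
proof (intro conjI allI impI)
  show "bounded_linear (\<lambda>h. \<Sum>i\<in>Basis. (h \<bullet> i) *\<^sub>R Dp i x)"
    by (intro bounded_linear_sum bounded_linear_scaleR_const bounded_linear_inner_left)
  fix e :: real assume e: "e > 0"
  define \<epsilon> where "\<epsilon> = e / (3 * DIM('a))"
  have \<epsilon>: "\<epsilon> > 0" using e by (simp add: \<epsilon>_def)
  have ev: "\<forall>\<^sub>F y in nhds x. y \<in> U \<and> (\<forall>i\<in>Basis. norm (Dp i y - Dp i x) \<le> \<epsilon>)"
  proof (intro eventually_conj eventually_ball_finite ballI)
    show "\<forall>\<^sub>F y in nhds x. y \<in> U" using U eventually_nhds by blast
    show "finite (Basis::'a set)" by simp
    fix i :: 'a assume i: "i \<in> Basis"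
    have "isCont (Dp i) x" using cont[OF i] U continuous_on_eq_continuous_at by blast
    hence "(Dp i \<longlongrightarrow> Dp i x) (nhds x)" using tendsto_at_iff_tendsto_nhds isCont_def by blast
    hence "\<forall>\<^sub>F y in nhds x. dist (Dp i y) (Dp i x) < \<epsilon>" using \<epsilon> tendstoD by blast
    thus "\<forall>\<^sub>F y in nhds x. norm (Dp i y - Dp i x) \<le> \<epsilon>"
      by eventually_elim (simp add: dist_norm)
  qed
  then obtain d where d: "d > 0" and dP: "\<And>y. dist y x < d \<Longrightarrow> y \<in> U \<and> (\<forall>i\<in>Basis. norm (Dp i y - Dp i x) \<le> \<epsilon>)"
    unfolding eventually_nhds_metric by blast
  define d' where "d' = d / DIM('a)"
  have d': "d' > 0" using d by (simp add: d'_def)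
  show "\<exists>d>0. \<forall>y. norm (y - x) < d \<longrightarrow>
           norm (f y - f x - (\<Sum>i\<in>Basis. ((y - x) \<bullet> i) *\<^sub>R Dp i x)) \<le> e * norm (y - x)"
  proof (intro exI[of _ d'] conjI allI impI d')
    fix y assume y: "norm (y - x) < d'"
    define h where "h = y - x"
    have hsum: "(\<Sum>b\<in>Basis. \<bar>h \<bullet> b\<bar>) < d"
    proof -
      have "(\<Sum>b\<in>Basis. \<bar>h \<bullet> b\<bar>) \<le> DIM('a) * norm h" by (rule sum_abs_basis_le)
      also have "\<dots> < DIM('a) * d'" using y by (simp add: h_def)
      also have "\<dots> = d" by (simp add: d'_def)
      finally show ?thesis .
    qed
    have claim: "B \<subseteq> Basis \<Longrightarrow> norm (f (x + (\<Sum>b\<in>B. (h \<bullet> b) *\<^sub>R b)) - f x - (\<Sum>b\<in>B. (h \<bullet> b) *\<^sub>R Dp b x))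
        \<le> 3 * \<epsilon> * (\<Sum>b\<in>B. \<bar>h \<bullet> b\<bar>)" for B
    proof (induction B rule: infinite_finite_induct)
      case (infinite A)
      then show ?case using finite_subset[OF _ finite_Basis] by blast
    next
      case empty
      then show ?case by simp
    next
      case (insert c B)
      define q where "q = x + (\<Sum>b\<in>B. (h \<bullet> b) *\<^sub>R b)"
      define t where "t = h \<bullet> c"
      have cB: "c \<in> Basis" "B \<subseteq> Basis" using insert by auto
      have sB: "(\<Sum>b\<in>B. \<bar>h \<bullet> b\<bar>) + \<bar>t\<bar> \<le> (\<Sum>b\<in>Basis. \<bar>h \<bullet> b\<bar>)"
      proof -
        have "(\<Sum>b\<in>B. \<bar>h \<bullet> b\<bar>) + \<bar>t\<bar> = (\<Sum>b\<in>insert c B. \<bar>h \<bullet> b\<bar>)"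
          using insert by (simp add: t_def)
        also have "\<dots> \<le> (\<Sum>b\<in>Basis. \<bar>h \<bullet> b\<bar>)"
          using insert by (intro sum_mono2) auto
        finally show ?thesis .
      qed
      have seg: "\<And>\<tau>. \<tau> \<in> closed_segment 0 t \<Longrightarrow> dist (q + \<tau> *\<^sub>R c) x < d"
      proof -
        fix \<tau> assume "\<tau> \<in> closed_segment 0 t"
        hence tau: "\<bar>\<tau>\<bar> \<le> \<bar>t\<bar>" by (auto simp: closed_segment_eq_real_ivl split: if_splits)
        have "dist (q + \<tau> *\<^sub>R c) x = norm ((\<Sum>b\<in>B. (h \<bullet> b) *\<^sub>R b) + \<tau> *\<^sub>R c)"
          by (simp add: q_def dist_norm)
        also have "\<dots> \<le> norm (\<Sum>b\<in>B. (h \<bullet> b) *\<^sub>R b) + norm (\<tau> *\<^sub>R c)" by (rule norm_triangle_ineq)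
        also have "\<dots> \<le> (\<Sum>b\<in>B. \<bar>h \<bullet> b\<bar>) + \<bar>t\<bar>"
          using norm_sum_basis_le[OF cB(2), of h] tau cB by simp
        also have "\<dots> < d" using sB hsum by linarith
        finally show "dist (q + \<tau> *\<^sub>R c) x < d" .
      qed
      have der: "((\<lambda>\<tau>. f (q + \<tau> *\<^sub>R c)) has_vector_derivative Dp c (q + \<tau> *\<^sub>R c)) (at \<tau> within closed_segment 0 t)"
        if "\<tau> \<in> closed_segment 0 t" for \<tau>
      proof -
        have yU: "q + \<tau> *\<^sub>R c \<in> U" using dP seg[OF that] by blast
        have "((\<lambda>s. f ((q + \<tau> *\<^sub>R c) + s *\<^sub>R c)) has_vector_derivative Dp c (q + \<tau> *\<^sub>R c)) (at 0)"
          by (rule pd[OF yU cB(1)])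
        hence "((\<lambda>s. f (q + (\<tau> + s) *\<^sub>R c)) has_vector_derivative Dp c (q + \<tau> *\<^sub>R c)) (at 0)"
          by (simp add: scaleR_add_left add.assoc)
        hence "((\<lambda>s. f (q + s *\<^sub>R c)) has_vector_derivative Dp c (q + \<tau> *\<^sub>R c)) (at \<tau>)"
          using hvd_shift[of "\<lambda>s. f (q + s *\<^sub>R c)" \<tau>] by simp
        thus ?thesis by (rule has_vector_derivative_at_within)
      qed
      have bnd: "norm (Dp c (q + \<tau> *\<^sub>R c) - Dp c (q + 0 *\<^sub>R c)) \<le> 2 * \<epsilon>"
        if "\<tau> \<in> closed_segment 0 t" for \<tau>
      proof -
        have "norm (Dp c (q + \<tau> *\<^sub>R c) - Dp c x) \<le> \<epsilon>" using dP seg[OF that] cB by blast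
        moreover have "norm (Dp c (q + 0 *\<^sub>R c) - Dp c x) \<le> \<epsilon>"
          using dP seg[of 0] cB by auto
        ultimately show ?thesis using norm_triangle_ineq4[of "Dp c (q + \<tau> *\<^sub>R c) - Dp c x" "Dp c (q + 0 *\<^sub>R c) - Dp c x"]
          by simp
      qed
      have mvt: "norm (f (q + t *\<^sub>R c) - f (q + 0 *\<^sub>R c) - (t - 0) *\<^sub>R Dp c (q + 0 *\<^sub>R c)) \<le> norm (t - 0) * (2 * \<epsilon>)"
        by (rule vector_differentiable_bound_linearization[where S="closed_segment 0 t"])
           (use der bnd in auto)
      have c0: "norm (Dp c q - Dp c x) \<le> \<epsilon>" using dP seg[of 0] cB by auto
      have eq1: "x + (\<Sum>b\<in>insert c B. (h \<bullet> b) *\<^sub>R b) = q + t *\<^sub>R c"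
        using insert by (simp add: q_def t_def algebra_simps)
      have eq2: "(\<Sum>b\<in>insert c B. (h \<bullet> b) *\<^sub>R Dp b x) = t *\<^sub>R Dp c x + (\<Sum>b\<in>B. (h \<bullet> b) *\<^sub>R Dp b x)"
        using insert by (simp add: t_def)
      have IH: "norm (f q - f x - (\<Sum>b\<in>B. (h \<bullet> b) *\<^sub>R Dp b x)) \<le> 3 * \<epsilon> * (\<Sum>b\<in>B. \<bar>h \<bullet> b\<bar>)"
        using insert cB by (simp add: q_def)
      have decomp: "f (q + t *\<^sub>R c) - f x - (t *\<^sub>R Dp c x + (\<Sum>b\<in>B. (h \<bullet> b) *\<^sub>R Dp b x))
          = (f (q + t *\<^sub>R c) - f q - t *\<^sub>R Dp c q) + t *\<^sub>R (Dp c q - Dp c x) + (f q - f x - (\<Sum>b\<in>B. (h \<bullet> b) *\<^sub>R Dp b x))"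
        by (simp add: algebra_simps)
      have "norm (f (q + t *\<^sub>R c) - f x - (t *\<^sub>R Dp c x + (\<Sum>b\<in>B. (h \<bullet> b) *\<^sub>R Dp b x)))
          \<le> norm (f (q + t *\<^sub>R c) - f q - t *\<^sub>R Dp c q) + norm (t *\<^sub>R (Dp c q - Dp c x)) + norm (f q - f x - (\<Sum>b\<in>B. (h \<bullet> b) *\<^sub>R Dp b x))"
        unfolding decomp by (rule norm3)
      also have "\<dots> \<le> \<bar>t\<bar> * (2 * \<epsilon>) + \<bar>t\<bar> * \<epsilon> + 3 * \<epsilon> * (\<Sum>b\<in>B. \<bar>h \<bullet> b\<bar>)"
      proof -
        have a: "norm (f (q + t *\<^sub>R c) - f q - t *\<^sub>R Dp c q) \<le> \<bar>t\<bar> * (2 * \<epsilon>)" using mvt by simp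
        have b: "norm (t *\<^sub>R (Dp c q - Dp c x)) \<le> \<bar>t\<bar> * \<epsilon>"
          using c0 by (simp add: mult_left_mono)
        show ?thesis using a b IH by linarith
      qed
      also have "\<dots> = 3 * \<epsilon> * (\<Sum>b\<in>insert c B. \<bar>h \<bullet> b\<bar>)"
        using insert by (simp add: t_def algebra_simps)
      finally show ?case by (simp add: eq1 eq2)
    qed
    have "norm (f (x + (\<Sum>b\<in>Basis. (h \<bullet> b) *\<^sub>R b)) - f x - (\<Sum>b\<in>Basis. (h \<bullet> b) *\<^sub>R Dp b x))
        \<le> 3 * \<epsilon> * (\<Sum>b\<in>Basis. \<bar>h \<bullet> b\<bar>)" by (rule claim) simp
    also have "\<dots> \<le> 3 * \<epsilon> * (DIM('a) * norm h)"
      using \<epsilon> sum_abs_basis_le[of h] by (intro mult_left_mono) auto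
    also have "\<dots> = e * norm h" by (simp add: \<epsilon>_def)
    finally show "norm (f y - f x - (\<Sum>i\<in>Basis. ((y - x) \<bullet> i) *\<^sub>R Dp i x)) \<le> e * norm (y - x)"
      by (simp add: h_def euclidean_representation)
  qed
qed


lemma cramer3: "(a \<bullet> cross3 b c) *\<^sub>R x = (x \<bullet> cross3 b c) *\<^sub>R a + (x \<bullet> cross3 c a) *\<^sub>R b + (x \<bullet> cross3 a b) *\<^sub>R c"
  by (simp add: cross3_simps forall_3) (simp add: field_simps)?

lemma triple_cross: "cross3 (cross3 u v) w = (u \<bullet> w) *\<^sub>R v - (v \<bullet> w) *\<^sub>R u"
  by (simp add: cross3_simps forall_3)

lemma triple_dot: "cross3 m y \<bullet> e = - (y \<bullet> cross3 m e)"
  by (simp add: cross3_simps)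

lemma lagrange_dot: "cross3 m y \<bullet> cross3 m e = (m \<bullet> m) * (y \<bullet> e) - (m \<bullet> e) * (y \<bullet> m)"
  by (simp add: cross3_simps)


lemma frame_expand:
  assumes "e \<bullet> e = 1" "m \<bullet> m = 1" "m \<bullet> e = 0"
  shows "x = (x \<bullet> e) *\<^sub>R e + (x \<bullet> cross3 m e) *\<^sub>R cross3 m e + (x \<bullet> m) *\<^sub>R m"
proof -
  have em: "e \<bullet> m = 0" using assms by (simp add: inner_commute)
  have 1: "cross3 (cross3 m e) m = e" using assms em by (simp add: triple_cross)
  have 2: "cross3 e (cross3 m e) = m"
    using triple_cross[of m e e] assms em cross_skew[of e "cross3 m e"]
    by (simp add: cross3_def[symmetric])
  have 3: "e \<bullet> cross3 (cross3 m e) m = 1" using 1 assms by simp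
  have "(e \<bullet> cross3 (cross3 m e) m) *\<^sub>R x = (x \<bullet> cross3 (cross3 m e) m) *\<^sub>R e + (x \<bullet> cross3 m e) *\<^sub>R cross3 m e + (x \<bullet> cross3 e (cross3 m e)) *\<^sub>R m"
    by (rule cramer3)
  thus ?thesis using 1 2 3 by simp
qed

lemma frame_inner:
  assumes "e \<bullet> e = 1" "m \<bullet> m = 1" "m \<bullet> e = 0"
  shows "x \<bullet> y = (x \<bullet> e) * (y \<bullet> e) + (x \<bullet> cross3 m e) * (y \<bullet> cross3 m e) + (x \<bullet> m) * (y \<bullet> m)"
proof -
  have "x \<bullet> y = ((x \<bullet> e) *\<^sub>R e + (x \<bullet> cross3 m e) *\<^sub>R cross3 m e + (x \<bullet> m) *\<^sub>R m) \<bullet> y"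
    using frame_expand[OF assms, of x] by simp
  also have "\<dots> = (x \<bullet> e) * (e \<bullet> y) + (x \<bullet> cross3 m e) * (cross3 m e \<bullet> y) + (x \<bullet> m) * (m \<bullet> y)"
    by (simp add: inner_add_left)
  finally show ?thesis by (simp add: inner_commute)
qed

lemma frame_zero:
  assumes "e \<bullet> e = 1" "m \<bullet> m = 1" "m \<bullet> e = 0"
    and "x \<bullet> e = 0" "x \<bullet> cross3 m e = 0" "x \<bullet> m = 0"
  shows "x = 0"
  using frame_expand[OF assms(1-3), of x] assms(4-6) by simp


lemma vec3: "vector [a,b,c] = a *\<^sub>R axis (1::3) 1 + b *\<^sub>R axis (2::3) 1 + (c::real) *\<^sub>R axis (3::3) 1"
  by (simp add: vec_eq_iff forall_3 vector_def axis_def)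

definition swD :: "real \<times> real \<Rightarrow> real \<times> real \<Rightarrow> real ^ 3" where
  "swD z h = vector [fst h, (12 * snd z ^ 2 - 2 * fst z) * snd h - 2 * snd z * fst h,
                   (12 * snd z ^ 3 - 2 * fst z * snd z) * snd h - snd z ^ 2 * fst h]"

lemma sw_eq: "swallowtail_germ = (\<lambda>z. (fst z) *\<^sub>R axis (1::3) 1 + (4 * snd z ^ 3 - 2 * fst z * snd z) *\<^sub>R axis (2::3) 1
     + (3 * snd z ^ 4 - fst z * snd z ^ 2) *\<^sub>R axis (3::3) 1)"
  by (auto simp: swallowtail_germ_def fun_eq_iff vec3)

lemma sw_deriv: "(swallowtail_germ has_derivative swD z) (at z)"
proof -
  have "swD z = (\<lambda>h. (fst h) *\<^sub>R axis (1::3) 1 + ((12 * snd z ^ 2 - 2 * fst z) * snd h - 2 * snd z * fst h) *\<^sub>R axis (2::3) 1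
     + ((12 * snd z ^ 3 - 2 * fst z * snd z) * snd h - snd z ^ 2 * fst h) *\<^sub>R axis (3::3) 1)"
    by (auto simp: swD_def fun_eq_iff vec3)
  moreover have "((\<lambda>z. (fst z) *\<^sub>R axis (1::3) 1 + (4 * snd z ^ 3 - 2 * fst z * snd z) *\<^sub>R axis (2::3) 1
     + (3 * snd z ^ 4 - fst z * snd z ^ 2) *\<^sub>R axis (3::3) 1) has_derivative
     (\<lambda>h. (fst h) *\<^sub>R axis (1::3) 1 + ((12 * snd z ^ 2 - 2 * fst z) * snd h - 2 * snd z * fst h) *\<^sub>R axis (2::3) 1
     + ((12 * snd z ^ 3 - 2 * fst z * snd z) * snd h - snd z ^ 2 * fst h) *\<^sub>R axis (3::3) 1)) (at z)"
    by (rule derivative_eq_intros refl)+ (simp add: algebra_simps power2_eq_square power3_eq_cube)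
  ultimately show ?thesis by (simp add: sw_eq)
qed

lemma swD_0: "swD (0,0) (0,1) = 0"
  by (simp add: swD_def vec_eq_iff forall_3 vector_def)

lemma swD_sing:
  assumes "swD z w = 0" "w \<noteq> 0"
  shows "fst z = 6 * snd z ^ 2"
proof -
  have a: "fst w = 0" using assms(1) by (simp add: swD_def vec_eq_iff forall_3 vector_def)
  hence "snd w \<noteq> 0" using assms(2) by (metis prod.collapse zero_prod_def)
  moreover have "(12 * snd z ^ 2 - 2 * fst z) * snd w = 0"
    using assms(1) a by (simp add: swD_def vec_eq_iff forall_3 vector_def)
  ultimately show ?thesis by simp
qed


lemma bb_cross: "bounded_bilinear cross3"
  using bilinear_cross bilinear_conv_bounded_bilinear by blast

lemma hvd_cross:
  assumes "(x has_vector_derivative x') (at s)" "(y has_vector_derivative y') (at s)"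
  shows "((\<lambda>t. cross3 (x t) (y t)) has_vector_derivative (cross3 (x s) y' + cross3 x' (y s))) (at s)"
  using bounded_bilinear.has_vector_derivative[OF bb_cross assms] .

lemma hvd_inner:
  fixes x y :: "real \<Rightarrow> 'a::real_inner"
  assumes "(x has_vector_derivative x') (at s)" "(y has_vector_derivative y') (at s)"
  shows "((\<lambda>t. x t \<bullet> y t) has_vector_derivative (x s \<bullet> y' + x' \<bullet> y s)) (at s)"
  using bounded_bilinear.has_vector_derivative[OF bounded_bilinear_inner assms] .

lemma inner_const_deriv:
  fixes x y :: "real \<Rightarrow> 'a::real_inner"
  assumes "open I" "s \<in> I" "(x has_vector_derivative x') (at s)" "(y has_vector_derivative y') (at s)"
    and "\<And>t. t \<in> I \<Longrightarrow> x t \<bullet> y t = k"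
  shows "x s \<bullet> y' + x' \<bullet> y s = 0"
proof -
  have "((\<lambda>t. k) has_vector_derivative (x s \<bullet> y' + x' \<bullet> y s)) (at s)"
    by (rule has_vector_derivative_transform_within_open[OF hvd_inner[OF assms(3,4)] assms(1,2)])
       (use assms(5) in auto)
  moreover have "((\<lambda>t. k) has_vector_derivative 0) (at s)" by simp
  ultimately show ?thesis using vector_derivative_unique_at by blast
qed

lemma geom:
  fixes e1 e1' n n' n'' :: "real \<Rightarrow> real^3"
  assumes I: "open I" "s \<in> I"
    and de1: "\<And>s. s \<in> I \<Longrightarrow> (e1 has_vector_derivative e1' s) (at s)"
    and dn: "\<And>s. s \<in> I \<Longrightarrow> (n has_vector_derivative n' s) (at s)"
    and dn': "\<And>s. s \<in> I \<Longrightarrow> (n' has_vector_derivative n'' s) (at s)"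
    and unit: "\<And>s. s \<in> I \<Longrightarrow> e1 s \<bullet> e1 s = 1 \<and> n s \<bullet> n s = 1 \<and> n s \<bullet> e1 s = 0"
    and e2_def: "e2 = (\<lambda>s. cross3 (n s) (e1 s))"
    and e2'_def: "e2' = (\<lambda>s. cross3 (n s) (e1' s) + cross3 (n' s) (e1 s))"
    and k1_def: "k1 = (\<lambda>s. e1' s \<bullet> e2 s)"
    and k2_def: "k2 = (\<lambda>s. e1' s \<bullet> n s)"
    and k3_def: "k3 = (\<lambda>s. e2' s \<bullet> n s)"
  shows "\<exists>D2 D3. (k2 has_real_derivative D2) (at s) \<and> (k3 has_real_derivative D3) (at s)
     \<and> cross3 (n s) (n' s) \<bullet> e1 s = k3 s \<and> cross3 (n s) (n' s) \<bullet> e2 s = - k2 s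
     \<and> cross3 (n s) (n' s) \<bullet> n s = 0
     \<and> cross3 (n s) (n'' s) \<bullet> e1 s = D3 + k1 s * k2 s
     \<and> cross3 (n s) (n'' s) \<bullet> e2 s = - D2 + k1 s * k3 s
     \<and> cross3 (n s) (n'' s) \<bullet> n s = 0"
proof -
  have de2: "\<And>s. s \<in> I \<Longrightarrow> (e2 has_vector_derivative e2' s) (at s)"
    unfolding e2_def e2'_def using hvd_cross de1 dn by blast
  have u: "e1 s \<bullet> e1 s = 1" "n s \<bullet> n s = 1" "n s \<bullet> e1 s = 0" using unit I by auto
  have f1: "e1' s \<bullet> e1 s = 0"
    using inner_const_deriv[OF I de1[OF I(2)] de1[OF I(2)], of 1] unit by (simp add: inner_commute)
  have f2: "n' s \<bullet> n s = 0"
    using inner_const_deriv[OF I dn[OF I(2)] dn[OF I(2)], of 1] unit by (simp add: inner_commute)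
  have f3: "n' s \<bullet> e1 s = - k2 s"
    using inner_const_deriv[OF I dn[OF I(2)] de1[OF I(2)], of 0] unit
    by (simp add: k2_def inner_commute)
  have f4: "e2' s \<bullet> e1 s = - k1 s"
    using inner_const_deriv[OF I de2[OF I(2)] de1[OF I(2)], of 0]
    by (simp add: k1_def e2_def inner_commute dot_cross_self)
  have f5: "n' s \<bullet> e2 s = - k3 s"
    using inner_const_deriv[OF I dn[OF I(2)] de2[OF I(2)], of 0]
    by (simp add: k3_def e2_def inner_commute dot_cross_self)
  have e2e2: "\<And>t. t \<in> I \<Longrightarrow> e2 t \<bullet> e2 t = 1"
    using unit by (simp add: e2_def lagrange_dot)
  have f6: "e2' s \<bullet> e2 s = 0"
    using inner_const_deriv[OF I de2[OF I(2)] de2[OF I(2)], of 1] e2e2 by (simp add: inner_commute)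
  have fr: "\<And>x y. x \<bullet> y = (x \<bullet> e1 s) * (y \<bullet> e1 s) + (x \<bullet> e2 s) * (y \<bullet> e2 s) + (x \<bullet> n s) * (y \<bullet> n s)"
    unfolding e2_def by (rule frame_inner[OF u])
  define D2 where "D2 = - (n s \<bullet> e1' s + n'' s \<bullet> e1 s) - 0"
  define D3 where "D3 = - (n' s \<bullet> e2' s + n'' s \<bullet> e2 s)"
  have k2eq: "\<And>t. t \<in> I \<Longrightarrow> k2 t = - (n' t \<bullet> e1 t)"
  proof -
    fix t assume t: "t \<in> I"
    show "k2 t = - (n' t \<bullet> e1 t)"
      using inner_const_deriv[OF I(1) t dn[OF t] de1[OF t], of 0] unit
      by (simp add: k2_def inner_commute)
  qed
  have k3eq: "\<And>t. t \<in> I \<Longrightarrow> k3 t = - (n' t \<bullet> e2 t)"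
  proof -
    fix t assume t: "t \<in> I"
    show "k3 t = - (n' t \<bullet> e2 t)"
      using inner_const_deriv[OF I(1) t dn[OF t] de2[OF t], of 0]
      by (simp add: k3_def e2_def inner_commute dot_cross_self)
  qed
  have dk2: "(k2 has_real_derivative - (n' s \<bullet> e1' s + n'' s \<bullet> e1 s)) (at s)"
    unfolding has_real_derivative_iff_has_vector_derivative
    by (rule has_vector_derivative_transform_within_open[OF
          has_vector_derivative_minus[OF hvd_inner[OF dn'[OF I(2)] de1[OF I(2)]]] I])
       (simp add: k2eq)
  have dk3: "(k3 has_real_derivative D3) (at s)"
    unfolding has_real_derivative_iff_has_vector_derivative D3_def
    by (rule has_vector_derivative_transform_within_open[OF
          has_vector_derivative_minus[OF hvd_inner[OF dn'[OF I(2)] de2[OF I(2)]]] I])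
       (simp add: k3eq)
  have g1: "cross3 (n s) (n' s) \<bullet> e1 s = k3 s"
    using triple_dot[of "n s" "n' s" "e1 s"] f5 by (simp add: e2_def)
  have g2: "cross3 (n s) (n' s) \<bullet> e2 s = - k2 s"
    using lagrange_dot[of "n s" "n' s" "e1 s"] f3 u f2 by (simp add: e2_def inner_commute)
  have g3: "cross3 (n s) (n' s) \<bullet> n s = 0"
    by (simp add: inner_commute dot_cross_self)
  have h3: "cross3 (n s) (n'' s) \<bullet> n s = 0"
    by (simp add: inner_commute dot_cross_self)
  have ne2': "n' s \<bullet> e2' s = k1 s * k2 s"
    using fr[of "n' s" "e2' s"] f3 f4 f5 f6 f2 by (simp add: inner_commute)
  have ne1': "n' s \<bullet> e1' s = - k1 s * k3 s"
    using fr[of "n' s" "e1' s"] f3 f1 f5 f2 by (simp add: inner_commute k1_def)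
  have h1: "cross3 (n s) (n'' s) \<bullet> e1 s = D3 + k1 s * k2 s"
    using triple_dot[of "n s" "n'' s" "e1 s"] ne2' by (simp add: e2_def D3_def)
  have h2: "cross3 (n s) (n'' s) \<bullet> e2 s = - (- (n' s \<bullet> e1' s + n'' s \<bullet> e1 s)) + k1 s * k3 s"
    using lagrange_dot[of "n s" "n'' s" "e1 s"] ne1' u by (simp add: e2_def inner_commute)
  show ?thesis
    by (intro exI[of _ "- (n' s \<bullet> e1' s + n'' s \<bullet> e1 s)"] exI[of _ D3] conjI dk2 dk3 g1 g2 g3 h1 h3)
       (use h2 in simp)
qed


lemma smooth_differentiable:
  fixes f :: "'a::euclidean_space \<Rightarrow> 'b::real_normed_vector"
  assumes "smooth_on U f" "x \<in> U"
  shows "f differentiable (at x)"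
proof -
  have U: "open U" using assms(1) by (simp add: smooth_on_def)
  have sm: "\<And>vs. set vs \<subseteq> Basis \<Longrightarrow> continuous_on U (pderivs vs f) \<and> (\<forall>x\<in>U. \<forall>v\<in>Basis. (\<lambda>t. pderivs vs f (x + t *\<^sub>R v)) differentiable (at 0))"
    using assms(1) unfolding smooth_on_def by blast
  have pd: "((\<lambda>t. f (y + t *\<^sub>R i)) has_vector_derivative pderivs [i] f y) (at 0)"
    if "y \<in> U" "i \<in> Basis" for y i
  proof -
    have "(\<lambda>t. pderivs [] f (y + t *\<^sub>R i)) differentiable (at 0)"
      using sm[of "[]"] that by simp
    thus ?thesis by (simp add: vector_derivative_works)
  qed
  have cont: "continuous_on U (pderivs [i] f)" if "i \<in> Basis" for i
    using sm[of "[i]"] that by simp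
  show ?thesis
    using partials_has_derivative[OF U assms(2) pd cont] unfolding differentiable_def by blast
qed

lemma inv_deriv:
  assumes "(f has_derivative M) (at z)" "(g has_derivative N) (at (f z))"
    and "open S" "z \<in> S" "\<And>y. y \<in> S \<Longrightarrow> g (f y) = y"
  shows "N (M h) = h"
proof -
  have "((\<lambda>y. g (f y)) has_derivative (\<lambda>h. N (M h))) (at z)"
    by (rule has_derivative_compose[OF assms(1,2)])
  hence "((\<lambda>y. y) has_derivative (\<lambda>h. N (M h))) (at z)"
    by (rule has_derivative_transform_within_open[OF _ assms(3,4)]) (use assms(5) in auto)
  moreover have "((\<lambda>y. y) has_derivative (\<lambda>h. h)) (at z)" by (rule has_derivative_ident)
  ultimately have "(\<lambda>h. N (M h)) = (\<lambda>h. h)" by (rule has_derivative_unique)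
  thus ?thesis by metis
qed

lemma env_deriv:
  assumes "(\<gamma> has_vector_derivative g1) (at s)"
    and "((\<lambda>s. cross3 (n s) (vector_derivative n (at s))) has_vector_derivative c1) (at s)"
  shows "(envelope_map \<gamma> n has_derivative
     (\<lambda>h. fst h *\<^sub>R (g1 + u *\<^sub>R c1) + snd h *\<^sub>R cross3 (n s) (vector_derivative n (at s)))) (at (s, u))"
proof -
  define c where "c = (\<lambda>s. cross3 (n s) (vector_derivative n (at s)))"
  have e: "envelope_map \<gamma> n = (\<lambda>z. \<gamma> (fst z) + snd z *\<^sub>R c (fst z))"
    by (auto simp: envelope_map_def c_def fun_eq_iff)
  have G: "((\<lambda>z. \<gamma> (fst z)) has_derivative (\<lambda>h. fst h *\<^sub>R g1)) (at (s, u))"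
    using has_derivative_compose[OF has_derivative_fst[OF has_derivative_ident, of "at (s,u)"],
        of \<gamma> "\<lambda>x. x *\<^sub>R g1"] assms(1) by (simp add: has_vector_derivative_def)
  have C: "((\<lambda>z. c (fst z)) has_derivative (\<lambda>h. fst h *\<^sub>R c1)) (at (s, u))"
    using has_derivative_compose[OF has_derivative_fst[OF has_derivative_ident, of "at (s,u)"],
        of c "\<lambda>x. x *\<^sub>R c1"] assms(2) by (simp add: has_vector_derivative_def c_def)
  have S: "((\<lambda>z. snd z) has_derivative (\<lambda>h. snd h)) (at (s, u))"
    by (rule has_derivative_snd[OF has_derivative_ident])
  have "((\<lambda>z. \<gamma> (fst z) + snd z *\<^sub>R c (fst z)) has_derivative
     (\<lambda>h. fst h *\<^sub>R g1 + (snd (s,u) *\<^sub>R (fst h *\<^sub>R c1) + snd h *\<^sub>R c (fst (s,u))))) (at (s, u))"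
    by (intro has_derivative_add G has_derivative_scaleR S C)
  thus ?thesis unfolding e c_def by (simp add: algebra_simps)
qed


lemma det2_zero:
  fixes w1 w2 a b c d :: real
  assumes "w1 * a + w2 * b = 0" "w1 * c + w2 * d = 0" "(w1, w2) \<noteq> (0, 0)"
  shows "a * d - b * c = 0"
proof (rule ccontr)
  assume h: "a * d - b * c \<noteq> 0"
  have "(a * d - b * c) * w1 = d * (w1 * a + w2 * b) - b * (w1 * c + w2 * d)" by (simp add: algebra_simps)
  hence "w1 = 0" using assms h by simp
  have "(a * d - b * c) * w2 = a * (w1 * c + w2 * d) - c * (w1 * a + w2 * b)" by (simp add: algebra_simps)
  hence "w2 = 0" using assms h by simp
  with \<open>w1 = 0\<close> assms(3) show False by simp
qed

theorem proposition1p11: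
  fixes \<gamma> n :: "real \<Rightarrow> real ^ 3" and I :: "real set" and s1 :: real and p :: "real ^ 3"
  assumes "open I" and "s1 \<in> I"
    and "smooth_on I \<gamma>" and "smooth_on I n"
    and "\<forall>s\<in>I. norm (vector_derivative \<gamma> (at s)) = 1"
    and "\<forall>s\<in>I. norm (n s) = 1 \<and> n s \<bullet> vector_derivative \<gamma> (at s) = 0"
    and "envelope_swallowtail I \<gamma> n s1 p"
  shows "dist (\<gamma> s1) p =
    \<bar>kappa2 \<gamma> n s1 * sqrt ((kappa2 \<gamma> n s1)\<^sup>2 + (kappa3 \<gamma> n s1)\<^sup>2) /
      (kappa2 \<gamma> n s1 * (deriv (kappa3 \<gamma> n) s1 + kappa1 \<gamma> n s1 * kappa2 \<gamma> n s1)
       + kappa3 \<gamma> n s1 * (- deriv (kappa2 \<gamma> n) s1 + kappa1 \<gamma> n s1 * kappa3 \<gamma> n s1))\<bar>"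
proof -
  define e1 where "e1 = frame_e1 \<gamma>"
  define n' where "n' = (\<lambda>s. vector_derivative n (at s))"
  define n'' where "n'' = (\<lambda>s. vector_derivative n' (at s))"
  define e1' where "e1' = (\<lambda>s. vector_derivative e1 (at s))"
  define e2 where "e2 = (\<lambda>s. cross3 (n s) (e1 s))"
  define e2' where "e2' = (\<lambda>s. cross3 (n s) (e1' s) + cross3 (n' s) (e1 s))"
  define k1 where "k1 = (\<lambda>s. e1' s \<bullet> e2 s)"
  define k2 where "k2 = (\<lambda>s. e1' s \<bullet> n s)"
  define k3 where "k3 = (\<lambda>s. e2' s \<bullet> n s)"
  define c where "c = (\<lambda>s. cross3 (n s) (n' s))"
  define c' where "c' = (\<lambda>s. cross3 (n s) (n'' s))"
  have I: "open I" "s1 \<in> I" using assms by auto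
  have e1eq: "e1 = (\<lambda>s. vector_derivative \<gamma> (at s))" by (simp add: e1_def frame_e1_def fun_eq_iff)
  have se1: "smooth_on I e1" unfolding e1eq by (rule smooth_real_D[OF assms(3)])
  have sn': "smooth_on I n'" unfolding n'_def by (rule smooth_real_D[OF assms(4)])
  have dg: "\<And>s. s \<in> I \<Longrightarrow> (\<gamma> has_vector_derivative e1 s) (at s)"
    unfolding e1eq using smooth_real_hvd[OF assms(3)] by blast
  have de1: "\<And>s. s \<in> I \<Longrightarrow> (e1 has_vector_derivative e1' s) (at s)"
    unfolding e1'_def using smooth_real_hvd[OF se1] by blast
  have dn: "\<And>s. s \<in> I \<Longrightarrow> (n has_vector_derivative n' s) (at s)"
    unfolding n'_def using smooth_real_hvd[OF assms(4)] by blast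
  have dn': "\<And>s. s \<in> I \<Longrightarrow> (n' has_vector_derivative n'' s) (at s)"
    unfolding n''_def using smooth_real_hvd[OF sn'] by blast
  have unit: "\<And>s. s \<in> I \<Longrightarrow> e1 s \<bullet> e1 s = 1 \<and> n s \<bullet> n s = 1 \<and> n s \<bullet> e1 s = 0"
    using assms(5,6) by (simp add: e1eq dot_square_norm)
  have dc: "\<And>s. s \<in> I \<Longrightarrow> (c has_vector_derivative c' s) (at s)"
  proof -
    fix s assume s: "s \<in> I"
    show "(c has_vector_derivative c' s) (at s)"
      using hvd_cross[OF dn[OF s] dn'[OF s]] by (simp add: c_def c'_def)
  qed
  obtain D2 D3 where dk2: "(k2 has_real_derivative D2) (at s1)" and dk3: "(k3 has_real_derivative D3) (at s1)"
     and g1: "c s1 \<bullet> e1 s1 = k3 s1" and g2: "c s1 \<bullet> e2 s1 = - k2 s1" and g3: "c s1 \<bullet> n s1 = 0"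
     and h1: "c' s1 \<bullet> e1 s1 = D3 + k1 s1 * k2 s1"
     and h2: "c' s1 \<bullet> e2 s1 = - D2 + k1 s1 * k3 s1"
     and h3: "c' s1 \<bullet> n s1 = 0"
    using geom[OF I de1 dn dn' unit e2_def e2'_def k1_def k2_def k3_def] unfolding c_def c'_def by blast
  have e2eq: "frame_e2 \<gamma> n = e2" by (simp add: fun_eq_iff frame_e2_def e2_def e1_def)
  have kap1: "kappa1 \<gamma> n s1 = k1 s1" by (simp add: kappa1_def k1_def e1'_def e1_def e2eq)
  have kap2: "kappa2 \<gamma> n = k2" by (simp add: fun_eq_iff kappa2_def k2_def e1'_def e1_def)
  have kap3: "\<And>s. s \<in> I \<Longrightarrow> kappa3 \<gamma> n s = k3 s"
  proof -
    fix s assume s: "s \<in> I"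
    have "(e2 has_vector_derivative e2' s) (at s)"
      unfolding e2_def e2'_def using hvd_cross[OF dn[OF s] de1[OF s]] .
    thus "kappa3 \<gamma> n s = k3 s" by (simp add: kappa3_def k3_def e2eq vector_derivative_at)
  qed
  have dkap2: "deriv (kappa2 \<gamma> n) s1 = D2" using dk2 kap2 by (simp add: DERIV_imp_deriv)
  have dkap3: "deriv (kappa3 \<gamma> n) s1 = D3"
  proof -
    have "(kappa3 \<gamma> n has_real_derivative D3) (at s1)"
      using dk3 unfolding has_real_derivative_iff_has_vector_derivative
      by (rule has_vector_derivative_transform_within_open[OF _ I]) (simp add: kap3)
    thus ?thesis by (rule DERIV_imp_deriv)
  qed
  have kap3s: "kappa3 \<gamma> n s1 = k3 s1" using kap3 I by blast
  have normc: "norm (c s1) = sqrt ((k2 s1)\<^sup>2 + (k3 s1)\<^sup>2)"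
  proof -
    have u: "e1 s1 \<bullet> e1 s1 = 1" "n s1 \<bullet> n s1 = 1" "n s1 \<bullet> e1 s1 = 0" using unit I by auto
    have "c s1 \<bullet> c s1 = (k3 s1)\<^sup>2 + (k2 s1)\<^sup>2"
      using frame_inner[OF u, of "c s1" "c s1"] g1 g2 g3 by (simp add: e2_def power2_eq_square)
    thus ?thesis by (simp add: norm_eq_sqrt_inner add.commute)
  qed

  define K1 where "K1 = k1 s1"
  define K2 where "K2 = k2 s1"
  define K3 where "K3 = k3 s1"
  define A where "A = D3 + K1 * K2"
  define B where "B = - D2 + K1 * K3"
  have rhs: "kappa2 \<gamma> n s1 * sqrt ((kappa2 \<gamma> n s1)\<^sup>2 + (kappa3 \<gamma> n s1)\<^sup>2) /
      (kappa2 \<gamma> n s1 * (deriv (kappa3 \<gamma> n) s1 + kappa1 \<gamma> n s1 * kappa2 \<gamma> n s1)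
       + kappa3 \<gamma> n s1 * (- deriv (kappa2 \<gamma> n) s1 + kappa1 \<gamma> n s1 * kappa3 \<gamma> n s1))
      = K2 * sqrt (K2\<^sup>2 + K3\<^sup>2) / (K2 * A + K3 * B)"
    using DERIV_imp_deriv[OF dk2] by (simp add: kap1 kap2 kap3s dkap3 K1_def K2_def K3_def A_def B_def)
  obtain u where p: "p = envelope_map \<gamma> n (s1, u)"
    and rl: "rl_equiv_germ (Sigma I (\<lambda>_. UNIV)) (envelope_map \<gamma> n) (s1, u) swallowtail_germ (0, 0)"
    using assms(7) unfolding envelope_swallowtail_def by blast
  have distp: "dist (\<gamma> s1) p = \<bar>u\<bar> * norm (c s1)"
    by (simp add: p envelope_map_def c_def n'_def dist_norm)
  define F where "F = envelope_map \<gamma> n"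
  define LF where "LF = (\<lambda>s v h. fst h *\<^sub>R (e1 s + v *\<^sub>R c' s) + snd h *\<^sub>R c s)"
  have dF: "\<And>s v. s \<in> I \<Longrightarrow> (F has_derivative LF s v) (at (s, v))"
  proof -
    fix s v assume s: "s \<in> I"
    have "((\<lambda>s. cross3 (n s) (vector_derivative n (at s))) has_vector_derivative c' s) (at s)"
      using dc[OF s] by (simp add: c_def n'_def)
    from env_deriv[OF dg[OF s] this, of v]
    show "(F has_derivative LF s v) (at (s, v))"
      by (simp add: F_def LF_def c_def n'_def)
  qed
  obtain U U' W W' \<phi> \<psi> where U0: "(0,0) \<in> U" and U'I: "U' \<subseteq> Sigma I (\<lambda>_. UNIV)" and FW: "F (s1, u) \<in> W"
    and dph: "diffeo_on U U' \<phi>" and dps: "diffeo_on W W' \<psi>" and ph0: "\<phi> (0,0) = (s1, u)"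
    and comm: "\<And>z. z \<in> U \<Longrightarrow> F (\<phi> z) \<in> W \<and> \<psi> (F (\<phi> z)) = swallowtail_germ z"
    using rl unfolding rl_equiv_germ_def F_def by blast
  define phi where "phi = inv_into U \<phi>"
  define psi where "psi = inv_into W \<psi>"
  have oU: "open U" and oU': "open U'" and sph: "smooth_on U \<phi>" and sphi: "smooth_on U' phi"
    and bph: "bij_betw \<phi> U U'"
    using dph by (auto simp: diffeo_on_def phi_def)
  have oW: "open W" and oW': "open W'" and sps: "smooth_on W \<psi>" and spsi: "smooth_on W' psi"
    and bps: "bij_betw \<psi> W W'"
    using dps by (auto simp: diffeo_on_def psi_def)
  have phiph: "\<And>z. z \<in> U \<Longrightarrow> phi (\<phi> z) = z"
    unfolding phi_def using bij_betw_imp_inj_on[OF bph] by (simp add: inv_into_f_f)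
  have phphi: "\<And>y. y \<in> U' \<Longrightarrow> \<phi> (phi y) = y"
    unfolding phi_def using bij_betw_inv_into_right[OF bph] by blast
  have phiU: "\<And>y. y \<in> U' \<Longrightarrow> phi y \<in> U"
    unfolding phi_def using bij_betw_apply[OF bij_betw_inv_into[OF bph]] by blast
  have phU': "\<And>z. z \<in> U \<Longrightarrow> \<phi> z \<in> U'" using bij_betw_apply[OF bph] by blast
  have psips: "\<And>y. y \<in> W \<Longrightarrow> psi (\<psi> y) = y"
    unfolding psi_def using bij_betw_imp_inj_on[OF bps] by (simp add: inv_into_f_f)
  have psW': "\<And>y. y \<in> W \<Longrightarrow> \<psi> y \<in> W'" using bij_betw_apply[OF bps] by blast
  define Dph where "Dph = (\<lambda>z. frechet_derivative \<phi> (at z))"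
  define Dphi where "Dphi = (\<lambda>z. frechet_derivative phi (at z))"
  define Dps where "Dps = (\<lambda>z. frechet_derivative \<psi> (at z))"
  define Dpsi where "Dpsi = (\<lambda>z. frechet_derivative psi (at z))"
  have hph: "\<And>z. z \<in> U \<Longrightarrow> (\<phi> has_derivative Dph z) (at z)"
    unfolding Dph_def using smooth_differentiable[OF sph] frechet_derivative_works by blast
  have hphi: "\<And>z. z \<in> U' \<Longrightarrow> (phi has_derivative Dphi z) (at z)"
    unfolding Dphi_def using smooth_differentiable[OF sphi] frechet_derivative_works by blast
  have hps: "\<And>z. z \<in> W \<Longrightarrow> (\<psi> has_derivative Dps z) (at z)"
    unfolding Dps_def using smooth_differentiable[OF sps] frechet_derivative_works by blast
  have hpsi: "\<And>z. z \<in> W' \<Longrightarrow> (psi has_derivative Dpsi z) (at z)"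
    unfolding Dpsi_def using smooth_differentiable[OF spsi] frechet_derivative_works by blast
  have fstI: "\<And>y. y \<in> U' \<Longrightarrow> fst y \<in> I" using U'I by auto
  define M0 where "M0 = Dph (0,0)"
  define N0 where "N0 = Dphi (s1, u)"
  have aU': "(s1, u) \<in> U'" using phU'[OF U0] ph0 by simp
  have phi_a: "phi (s1, u) = (0,0)" using phiph[OF U0] ph0 by simp
  have hM0: "(\<phi> has_derivative M0) (at (0,0))" using hph[OF U0] by (simp add: M0_def)
  have hN0: "(phi has_derivative N0) (at (s1,u))" using hphi[OF aU'] by (simp add: N0_def)
  have NM0: "\<And>h. N0 (M0 h) = h"
    by (rule inv_deriv[OF hM0 _ oU U0 phiph]) (use hN0 ph0 in simp)
  have MN0: "\<And>h. M0 (N0 h) = h"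
    by (rule inv_deriv[OF hN0 _ oU' aU' phphi]) (use hM0 phi_a in simp)
  have linM0: "bounded_linear M0" using hM0 by (rule has_derivative_bounded_linear)
  have linN0: "bounded_linear N0" using hN0 by (rule has_derivative_bounded_linear)
  have kerL: "LF s1 u (M0 (0,1)) = 0"
  proof -
    have d1: "((\<lambda>z. F (\<phi> z)) has_derivative (\<lambda>h. LF s1 u (M0 h))) (at (0,0))"
      using has_derivative_compose[OF hM0, of F "LF s1 u"] dF[OF I(2)] ph0 by simp
    have g0W': "swallowtail_germ (0,0) \<in> W'" using comm[OF U0] psW' by metis
    have d2: "((\<lambda>z. psi (swallowtail_germ z)) has_derivative (\<lambda>h. Dpsi (swallowtail_germ (0,0)) (swD (0,0) h))) (at (0,0))"
      by (rule has_derivative_compose[OF sw_deriv hpsi[OF g0W']])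
    have d2': "((\<lambda>z. F (\<phi> z)) has_derivative (\<lambda>h. Dpsi (swallowtail_germ (0,0)) (swD (0,0) h))) (at (0,0))"
    proof (rule has_derivative_transform_within_open[OF d2 oU U0])
      fix z assume z: "z \<in> U"
      show "psi (swallowtail_germ z) = F (\<phi> z)" using comm[OF z] psips by metis
    qed
    have "(\<lambda>h. LF s1 u (M0 h)) = (\<lambda>h. Dpsi (swallowtail_germ (0,0)) (swD (0,0) h))"
      by (rule has_derivative_unique[OF d1 d2'])
    hence "LF s1 u (M0 (0,1)) = Dpsi (swallowtail_germ (0,0)) (swD (0,0) (0,1))" by metis
    also have "\<dots> = 0"
      using swD_0 linear_simps(3)[OF has_derivative_bounded_linear[OF hpsi[OF g0W']]] by simp
    finally show ?thesis .
  qed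
  define w where "w = M0 (0,1)"
  have wnz: "w \<noteq> 0"
  proof
    assume "w = 0"
    hence "N0 w = 0" using linear_simps(3)[OF linN0] by simp
    moreover have "N0 w = (0,1)" using NM0 by (simp add: w_def)
    ultimately show False by (simp add: zero_prod_def)
  qed
  have u1: "e1 s1 \<bullet> e1 s1 = 1" "n s1 \<bullet> n s1 = 1" "n s1 \<bullet> e1 s1 = 0" using unit I by auto
  have e12: "e1 s1 \<bullet> e2 s1 = 0" by (simp add: e2_def dot_cross_self)
  have e1n: "e1 s1 \<bullet> n s1 = 0" using u1 by (simp add: inner_commute)
  have Lw: "fst w *\<^sub>R (e1 s1 + u *\<^sub>R c' s1) + snd w *\<^sub>R c s1 = 0" using kerL by (simp add: LF_def w_def)
  have eqA: "fst w * (1 + u * A) + snd w * K3 = 0"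
  proof -
    have "(fst w *\<^sub>R (e1 s1 + u *\<^sub>R c' s1) + snd w *\<^sub>R c s1) \<bullet> e1 s1 = 0" using Lw by simp
    thus ?thesis using u1 h1 g1 by (simp add: inner_add_left A_def K1_def K2_def K3_def algebra_simps)
  qed
  have eqB: "fst w * (u * B) + snd w * (- K2) = 0"
  proof -
    have "(fst w *\<^sub>R (e1 s1 + u *\<^sub>R c' s1) + snd w *\<^sub>R c s1) \<bullet> e2 s1 = 0" using Lw by simp
    thus ?thesis using e12 h2 g2 by (simp add: inner_add_left B_def K1_def K2_def K3_def algebra_simps)
  qed
  have det: "K2 + u * (K2 * A + K3 * B) = 0"
    using det2_zero[OF eqA eqB] wnz by (auto simp: algebra_simps prod_eq_iff)
  have nc: "norm (c s1) = sqrt (K2\<^sup>2 + K3\<^sup>2)" using normc by (simp add: K2_def K3_def)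
  show ?thesis
  proof (cases "K2 * A + K3 * B = 0")
    case False
    hence uu: "u = - K2 / (K2 * A + K3 * B)" using det by (simp add: field_simps)
    show ?thesis unfolding rhs distp nc uu
      by (simp add: abs_divide abs_mult)
  next
    case True
    hence K20: "K2 = 0" using det by simp
    have "c s1 = 0"
    proof (rule ccontr)
      assume cnz: "c s1 \<noteq> 0"
      have K3nz: "K3 \<noteq> 0"
      proof
        assume "K3 = 0"
        with nc K20 have "norm (c s1) = 0" by simp
        thus False using cnz by simp
      qed
      have B0: "B = 0" using True K20 K3nz by simp
      have h2': "c' s1 \<bullet> e2 s1 = B" using h2 by (simp add: B_def K1_def K3_def)
      have h1': "c' s1 \<bullet> e1 s1 = A" using h1 by (simp add: A_def K1_def K2_def)
      have Lr: "\<And>v. LF s1 v (K3, -(1 + v * A)) = 0"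
      proof -
        fix v
        define x where "x = LF s1 v (K3, -(1 + v * A))"
        have x1: "x \<bullet> e1 s1 = 0" using u1 h1' g1
          by (simp add: x_def LF_def inner_add_left K3_def algebra_simps)
        have x2: "x \<bullet> e2 s1 = 0" using e12 h2' g2 K20 B0
          by (simp add: x_def LF_def inner_add_left K2_def algebra_simps)
        have x3: "x \<bullet> n s1 = 0" using e1n h3 g3
          by (simp add: x_def LF_def inner_add_left algebra_simps)
        have "x = 0" by (rule frame_zero[OF u1 x1 x2[unfolded e2_def] x3])
        thus "LF s1 v (K3, -(1 + v * A)) = 0" by (simp add: x_def)
      qed
      obtain \<epsilon> where \<epsilon>: "\<epsilon> > 0" "ball (s1, u) \<epsilon> \<subseteq> U'" using oU' aU' open_contains_ball by blast
      have inU': "\<And>r. r \<in> ball 0 \<epsilon> \<Longrightarrow> (s1, u + r) \<in> U'"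
      proof -
        fix r :: real assume "r \<in> ball 0 \<epsilon>"
        hence "(s1, u + r) \<in> ball (s1, u) \<epsilon>" by (simp add: dist_Pair_Pair dist_norm)
        thus "(s1, u + r) \<in> U'" using \<epsilon> by blast
      qed
      have sing: "\<And>r. r \<in> ball 0 \<epsilon> \<Longrightarrow> fst (phi (s1, u + r)) = 6 * snd (phi (s1, u + r)) ^ 2"
      proof -
        fix r :: real assume r: "r \<in> ball 0 \<epsilon>"
        define y where "y = (s1, u + r)"
        define z where "z = phi y"
        have yU': "y \<in> U'" using inU'[OF r] y_def by simp
        have zU: "z \<in> U" using phiU[OF yU'] z_def by simp
        have phz: "\<phi> z = y" using phphi[OF yU'] z_def by simp
        define M where "M = Dph z"
        define N where "N = Dphi y"
        have hM: "(\<phi> has_derivative M) (at z)" using hph[OF zU] M_def by simp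
        have hN: "(phi has_derivative N) (at y)" using hphi[OF yU'] N_def by simp
        have MN: "\<And>h. M (N h) = h"
          by (rule inv_deriv[OF hN _ oU' yU' phphi]) (use hM z_def in simp)
        define k where "k = (K3, -(1 + (u + r) * A))"
        have knz: "k \<noteq> 0" using K3nz by (simp add: k_def zero_prod_def)
        have Lk: "LF s1 (u + r) k = 0" using Lr k_def by simp
        have FW': "F (\<phi> z) \<in> W" using comm[OF zU] by simp
        have d0: "((\<lambda>z. F (\<phi> z)) has_derivative (\<lambda>h. LF s1 (u + r) (M h))) (at z)"
          using has_derivative_compose[OF hM, of F "LF s1 (u + r)"] dF[OF I(2)] phz y_def by simp
        have d1: "((\<lambda>z. \<psi> (F (\<phi> z))) has_derivative (\<lambda>h. Dps (F (\<phi> z)) (LF s1 (u + r) (M h)))) (at z)"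
          by (rule has_derivative_compose[OF d0 hps[OF FW']])
        have d1': "(swallowtail_germ has_derivative (\<lambda>h. Dps (F (\<phi> z)) (LF s1 (u + r) (M h)))) (at z)"
        proof (rule has_derivative_transform_within_open[OF d1 oU zU])
          fix x assume "x \<in> U"
          thus "\<psi> (F (\<phi> x)) = swallowtail_germ x" using comm by blast
        qed
        have eq: "swD z = (\<lambda>h. Dps (F (\<phi> z)) (LF s1 (u + r) (M h)))"
          by (rule has_derivative_unique[OF sw_deriv d1'])
        have "swD z (N k) = 0"
          using eq MN Lk linear_simps(3)[OF has_derivative_bounded_linear[OF hps[OF FW']]] by simp
        moreover have "N k \<noteq> 0"
        proof
          assume "N k = 0"
          hence "M (N k) = 0" using linear_simps(3)[OF has_derivative_bounded_linear[OF hM]] by simp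
          thus False using MN knz by simp
        qed
        ultimately have "fst z = 6 * snd z ^ 2" by (rule swD_sing)
        thus "fst (phi (s1, u + r)) = 6 * snd (phi (s1, u + r)) ^ 2" using z_def y_def by simp
      qed
      define \<sigma> where "\<sigma> = (\<lambda>r. phi (s1, u + r))"
      have hpair: "((\<lambda>r::real. (s1, u + r)) has_derivative (\<lambda>r. (0, r))) (at 0)"
        by (auto intro!: derivative_eq_intros)
      have hs: "(\<sigma> has_derivative (\<lambda>r. N0 (0, r))) (at 0)"
        using has_derivative_compose[OF hpair, of phi N0] hN0 by (simp add: \<sigma>_def)
      have s0: "\<sigma> 0 = (0,0)" using phi_a \<sigma>_def by simp
      have d1: "((\<lambda>r. fst (\<sigma> r)) has_derivative (\<lambda>r. fst (N0 (0, r)))) (at 0)"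
        using has_derivative_fst[OF hs] .
      have d2: "((\<lambda>r. 6 * (snd (\<sigma> r) * snd (\<sigma> r))) has_derivative
          (\<lambda>r. 6 * (snd (\<sigma> 0) * snd (N0 (0, r)) + snd (N0 (0, r)) * snd (\<sigma> 0)))) (at 0)"
        by (intro has_derivative_mult_right has_derivative_mult has_derivative_snd hs)
      have d2': "((\<lambda>r. fst (\<sigma> r)) has_derivative
          (\<lambda>r. 6 * (snd (\<sigma> 0) * snd (N0 (0, r)) + snd (N0 (0, r)) * snd (\<sigma> 0)))) (at 0)"
      proof (rule has_derivative_transform_within_open[OF d2 open_ball])
        show "(0::real) \<in> ball 0 \<epsilon>" using \<epsilon> by simp
        fix r :: real assume "r \<in> ball 0 \<epsilon>"
        thus "6 * (snd (\<sigma> r) * snd (\<sigma> r)) = fst (\<sigma> r)"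
          using sing by (simp add: \<sigma>_def power2_eq_square)
      qed
      have "(\<lambda>r. fst (N0 (0, r))) = (\<lambda>r. 6 * (snd (\<sigma> 0) * snd (N0 (0, r)) + snd (N0 (0, r)) * snd (\<sigma> 0)))"
        by (rule has_derivative_unique[OF d1 d2'])
      hence fN: "fst (N0 (0, 1)) = 0" using s0 by (metis (no_types, lifting) mult_zero_left mult_zero_right add_0 snd_conv)
      define \<beta> where "\<beta> = snd (N0 (0, 1))"
      have Nb: "N0 (0, 1) = (0, \<beta>)" using fN \<beta>_def by (metis prod.collapse)
      have Mb: "M0 (0, \<beta>) = (0, 1)" using MN0[of "(0,1)"] Nb by simp
      have bnz: "\<beta> \<noteq> 0" using Mb linear_simps(3)[OF linM0] by (auto simp: zero_prod_def)
      have "M0 (0, 1) = (1 / \<beta>) *\<^sub>R (0, 1)"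
      proof -
        have "((0::real), (1::real)) = (1 / \<beta>) *\<^sub>R (0, \<beta>)" using bnz by simp
        hence "M0 (0, 1) = M0 ((1 / \<beta>) *\<^sub>R (0, \<beta>))" by simp
        also have "\<dots> = (1 / \<beta>) *\<^sub>R M0 (0, \<beta>)" by (rule linear_simps(5)[OF linM0])
        finally show ?thesis using Mb by simp
      qed
      hence "LF s1 u ((1 / \<beta>) *\<^sub>R (0, 1)) = 0" using kerL by simp
      hence "(1 / \<beta>) *\<^sub>R c s1 = 0" by (simp add: LF_def)
      hence "c s1 = 0" using bnz by simp
      thus False using cnz by simp
    qed
    thus ?thesis unfolding rhs distp using K20 by simp
  qed
qed
end
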